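(* Let $d\ge 1$. For every $R>0$ there exists a constant $C_R>0$ such that $\mu(Q(x,2r)) \le C_R\,\mu(Q(x,r))$ for all $x\in\mathbb{R}^d_+$ and $0<r\le R$. The same holds with $Q$ replaced by $B$ or by $D$.
   Context: $\mathbb{R}^d_+=(0,\infty)^d$ and $\mu$ is the measure on $\mathbb{R}^d_+$ with density $\exp(-|x|_1)$, $|x|_1=\sum_i|x_i|$. For $x\in\mathbb{R}^d_+$, $r>0$: $D(x,r)=\{y\in\mathbb{R}^d_+:|x-y|_1<r\}$, $B(x,r)=\{y\in\mathbb{R}^d_+:|x-y|_2<r\}$, $Q(x,r)=\{y\in\mathbb{R}^d_+:|x-y|_\infty<r\}$, with $|\cdot|_2$ Euclidean norm and $|\cdot|_\infty$ the max norm. *)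

theory Defs
  imports "HOL-Analysis.Analysis"
begin

text \<open>Points of R^d are modelled as vectors of type real^'n (d = CARD('n) \<ge> 1).\<close>

definition l1norm :: "real^'n \<Rightarrow> real" where
  "l1norm x = (\<Sum>i\<in>UNIV. \<bar>x $ i\<bar>)"

definition linfnorm :: "real^'n \<Rightarrow> real" where
  "linfnorm x = Max (range (\<lambda>i. \<bar>x $ i\<bar>))"

definition Rplus :: "(real^'n) set" where
  "Rplus = {x. \<forall>i. 0 < x $ i}"

definition mu :: "(real^'n) measure" where
  "mu = density lborel (\<lambda>y. indicator Rplus y * ennreal (exp (- l1norm y)))"

definition Dset :: "real^'n \<Rightarrow> real \<Rightarrow> (real^'n) set" where
  "Dset x r = {y \<in> Rplus. l1norm (x - y) < r}"

definition Bset :: "real^'n \<Rightarrow> real \<Rightarrow> (real^'n) set" where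
  "Bset x r = {y \<in> Rplus. norm (x - y) < r}"

definition Qset :: "real^'n \<Rightarrow> real \<Rightarrow> (real^'n) set" where
  "Qset x r = {y \<in> Rplus. linfnorm (x - y) < r}"

end

theory Submission
  imports Defs
begin

lemma nn_affine:
  fixes f :: "'a::euclidean_space \<Rightarrow> ennreal"
  assumes [measurable]: "f \<in> borel_measurable borel" and c: "c \<noteq> 0"
  shows "(\<integral>\<^sup>+x. f x \<partial>lborel) = ennreal (\<bar>c\<bar>^DIM('a)) * (\<integral>\<^sup>+x. f (t + c *\<^sub>R x) \<partial>lborel)"
  by (subst lborel_affine[OF c, of t])
     (simp add: nn_integral_density nn_integral_distr nn_integral_cmult)

lemma open_Rplus: "open (Rplus :: (real^'n) set)"
proof -
  have e: "Rplus = (\<Inter>i\<in>UNIV. {x::real^'n. 0 < x $ i})" unfolding Rplus_def by auto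
  have h: "open {x::real^'n. 0 < x $ i}" for i
    by (intro open_Collect_less continuous_intros)
  show ?thesis unfolding e by (intro open_INT finite_class.finite_UNIV ballI h)
qed

lemma cont_l1: "continuous_on UNIV (l1norm :: real^'n \<Rightarrow> real)"
  unfolding l1norm_def[abs_def] by (intro continuous_intros)

lemma linf_less: "linfnorm (z::real^'n) < r \<longleftrightarrow> (\<forall>i. \<bar>z$i\<bar> < r)"
  unfolding linfnorm_def by (subst Max_less_iff) auto

lemma comp_le_linf: "\<bar>(z::real^'n)$i\<bar> \<le> linfnorm z"
  unfolding linfnorm_def by (rule Max_ge) auto

lemma l1_le_linf: "l1norm (z::real^'n) \<le> CARD('n) * linfnorm z"
proof -
  have "l1norm z \<le> (\<Sum>i\<in>(UNIV::'n set). linfnorm z)" unfolding l1norm_def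
    by (rule sum_mono) (rule comp_le_linf)
  then show ?thesis by simp
qed

lemma l1_le_norm: "l1norm (z::real^'n) \<le> CARD('n) * norm z"
proof -
  have "l1norm z \<le> (\<Sum>i\<in>(UNIV::'n set). norm z)" unfolding l1norm_def
    by (rule sum_mono) (insert component_le_norm_cart[of z], simp)
  then show ?thesis by simp
qed

lemma l1_nonneg: "0 \<le> l1norm (z::real^'n)"
  unfolding l1norm_def by (intro sum_nonneg) auto

lemma l1_scale: "l1norm (c *\<^sub>R (z::real^'n)) = \<bar>c\<bar> * l1norm z"
  unfolding l1norm_def by (simp add: abs_mult sum_distrib_left)

lemma l1_minus: "l1norm ((z::real^'n) - w) = l1norm (w - z)"
  unfolding l1norm_def by (simp add: abs_minus_commute)

lemma l1_triangle: "l1norm ((z::real^'n) + w) \<le> l1norm z + l1norm w"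
  unfolding l1norm_def by (simp add: sum.distrib[symmetric] sum_mono abs_triangle_ineq)

lemma open_Qset: "open (Qset (x::real^'n) r)"
proof -
  have "Qset x r = Rplus \<inter> (\<Inter>i\<in>UNIV. {y::real^'n. \<bar>x$i - y$i\<bar> < r})"
    unfolding Qset_def linf_less by auto
  moreover have "open {y::real^'n. \<bar>x$i - y$i\<bar> < r}" for i
    by (intro open_Collect_less continuous_intros)
  ultimately show ?thesis using open_Rplus by (auto intro!: open_INT)
qed

lemma open_Bset: "open (Bset (x::real^'n) r)"
proof -
  have "Bset x r = Rplus \<inter> ball x r" unfolding Bset_def ball_def dist_norm by auto
  then show ?thesis using open_Rplus by auto
qed

lemma open_Dset: "open (Dset (x::real^'n) r)"
proof -
  have "Dset x r = Rplus \<inter> {y. l1norm (x - y) < r}" unfolding Dset_def by auto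
  moreover have "open {y::real^'n. l1norm (x - y) < r}"
    by (intro open_Collect_less continuous_on_compose2[OF cont_l1] continuous_intros) auto
  ultimately show ?thesis using open_Rplus by auto
qed

lemma key:
  fixes x :: "real^'n" and A B :: "(real^'n) set" and K :: real
  assumes x: "x \<in> Rplus" and A: "open A" and B: "open B"
    and h: "\<And>y. y \<in> A \<Longrightarrow> y \<in> Rplus \<Longrightarrow>
             (1/2) *\<^sub>R x + (1/2) *\<^sub>R y \<in> B \<and> l1norm (y - x) \<le> 2*K"
  shows "emeasure mu A \<le> ennreal (2^DIM(real^'n) * exp K) * emeasure mu B"
proof -
  define f :: "real^'n \<Rightarrow> ennreal" where "f = (\<lambda>y. indicator Rplus y * ennreal (exp (- l1norm y)))"
  define T where "T = (\<lambda>y::real^'n. (1/2) *\<^sub>R x + (1/2) *\<^sub>R y)"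
  define g where "g = (\<lambda>z. f z * indicator B z)"
  have [measurable]: "Rplus \<in> sets (borel :: (real^'n) measure)" using open_Rplus by (rule borel_open)
  have [measurable]: "A \<in> sets borel" "B \<in> sets borel" using A B by (auto intro: borel_open)
  have [measurable]: "(l1norm :: real^'n \<Rightarrow> real) \<in> borel_measurable borel"
    using cont_l1 by (rule borel_measurable_continuous_onI)
  have fm[measurable]: "f \<in> borel_measurable borel" unfolding f_def by measurable
  have gm[measurable]: "g \<in> borel_measurable borel" unfolding g_def by measurable
  have Tm[measurable]: "T \<in> borel_measurable borel" unfolding T_def by measurable
  have muA: "emeasure mu A = (\<integral>\<^sup>+y. f y * indicator A y \<partial>lborel)"
    unfolding mu_def f_def by (subst emeasure_density) auto
  have muB: "emeasure mu B = (\<integral>\<^sup>+y. g y \<partial>lborel)"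
    unfolding mu_def g_def f_def by (subst emeasure_density) auto
  have pw: "f y * indicator A y \<le> ennreal (exp K) * g (T y)" for y
  proof (cases "y \<in> A \<and> y \<in> Rplus")
    case False
    then show ?thesis unfolding f_def by (auto simp: indicator_def)
  next
    case True
    with h have TB: "T y \<in> B" and hK: "l1norm (y - x) \<le> 2*K" unfolding T_def by auto
    have TR: "T y \<in> Rplus" using True x unfolding T_def Rplus_def by (auto intro: add_pos_pos)
    have "l1norm (T y) \<le> l1norm ((1/2) *\<^sub>R x) + l1norm ((1/2) *\<^sub>R y)"
      unfolding T_def by (rule l1_triangle)
    also have "\<dots> = (l1norm x + l1norm y)/2" by (simp add: l1_scale)
    finally have 1: "l1norm (T y) \<le> (l1norm x + l1norm y)/2" .
    have "l1norm x \<le> l1norm y + l1norm (x - y)"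
      using l1_triangle[of y "x - y"] by simp
    then have 2: "l1norm x \<le> l1norm y + 2*K" using hK l1_minus[of x y] by simp
    have "exp (- l1norm y) \<le> exp K * exp (- l1norm (T y))"
      using 1 2 by (simp add: exp_add[symmetric])
    then have "ennreal (exp (- l1norm y)) \<le> ennreal (exp K) * ennreal (exp (- l1norm (T y)))"
      by (simp add: ennreal_mult[symmetric])
    then show ?thesis using True TB TR unfolding f_def g_def by simp
  qed
  have aff: "(\<integral>\<^sup>+z. g z \<partial>lborel) = ennreal (\<bar>1/2::real\<bar>^DIM(real^'n)) * (\<integral>\<^sup>+y. g ((1/2) *\<^sub>R x + (1/2::real) *\<^sub>R y) \<partial>lborel)"
    by (rule nn_affine[OF gm]) simp
  have "emeasure mu A \<le> (\<integral>\<^sup>+y. ennreal (exp K) * g (T y) \<partial>lborel)"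
    unfolding muA by (rule nn_integral_mono) (rule pw)
  also have "\<dots> = ennreal (exp K) * (\<integral>\<^sup>+y. g (T y) \<partial>lborel)"
    by (rule nn_integral_cmult) measurable
  also have "(\<integral>\<^sup>+y. g (T y) \<partial>lborel) = ennreal (2^DIM(real^'n)) * emeasure mu B"
  proof -
    have "ennreal (2^DIM(real^'n)) * emeasure mu B
        = ennreal (2^DIM(real^'n)) * (ennreal ((1/2)^DIM(real^'n)) * (\<integral>\<^sup>+y. g (T y) \<partial>lborel))"
      unfolding muB aff T_def by (simp add: ennreal_power)
    also have "\<dots> = ennreal (2^DIM(real^'n) * (1/2)^DIM(real^'n)) * (\<integral>\<^sup>+y. g (T y) \<partial>lborel)"
      by (simp add: ennreal_mult mult.assoc)
    also have "2^DIM(real^'n) * (1/2)^DIM(real^'n) = (1::real)"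
      by (simp add: power_mult_distrib[symmetric])
    finally show ?thesis by simp
  qed
  finally show ?thesis by (simp add: ennreal_mult mult.assoc mult.commute mult.left_commute)
qed

lemma half_diff: "(x::real^'n) - ((1/2) *\<^sub>R x + (1/2) *\<^sub>R y) = (1/2) *\<^sub>R (x - y)"
  by (simp add: vec_eq_iff field_simps)

lemma doubling:
  fixes S :: "real^'n \<Rightarrow> real \<Rightarrow> (real^'n) set"
  assumes op: "\<And>(x::real^'n) (r::real). open (S x r)"
    and H: "\<And>(x::real^'n) (r::real) y. x \<in> Rplus \<Longrightarrow> 0 < r \<Longrightarrow> y \<in> S x (2*r) \<Longrightarrow> y \<in> Rplus \<Longrightarrow>
          (1/2) *\<^sub>R x + (1/2) *\<^sub>R y \<in> S x r \<and> l1norm (y - x) \<le> 2 * (CARD('n) * r)"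
  shows "\<forall>R>0. \<exists>C>0. \<forall>x\<in>(Rplus::(real^'n) set). \<forall>r. 0 < r \<and> r \<le> R \<longrightarrow>
            emeasure mu (S x (2*r)) \<le> ennreal C * emeasure mu (S x r)"
proof (intro allI impI)
  fix R :: real assume R: "0 < R"
  show "\<exists>C>0. \<forall>x\<in>(Rplus::(real^'n) set). \<forall>r. 0 < r \<and> r \<le> R \<longrightarrow>
            emeasure mu (S x (2*r)) \<le> ennreal C * emeasure mu (S x r)"
  proof (intro exI[of _ "2^DIM(real^'n) * exp (CARD('n) * R)"] conjI ballI allI impI)
    show "0 < 2^DIM(real^'n) * exp (CARD('n) * R)" by simp
  next
    fix x :: "real^'n" and r :: real assume x: "x \<in> Rplus" and r: "0 < r \<and> r \<le> R"
    show "emeasure mu (S x (2*r)) \<le> ennreal (2^DIM(real^'n) * exp (CARD('n) * R)) * emeasure mu (S x r)"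
    proof (rule key[OF x op op])
      fix y assume "y \<in> S x (2*r)" "y \<in> Rplus"
      with H[OF x _ this] r have "(1/2) *\<^sub>R x + (1/2) *\<^sub>R y \<in> S x r"
        and "l1norm (y - x) \<le> 2 * (CARD('n) * r)" by auto
      moreover have "2 * (CARD('n) * r) \<le> 2 * (CARD('n) * R)" using r by simp
      ultimately show "(1/2) *\<^sub>R x + (1/2) *\<^sub>R y \<in> S x r \<and> l1norm (y - x) \<le> 2 * (CARD('n) * R)"
        by linarith
    qed
  qed
qed

theorem lemma2p2:
  shows "(\<forall>R>0. \<exists>C>0. \<forall>(x::real^'n)\<in>Rplus. \<forall>r. 0 < r \<and> r \<le> R \<longrightarrow>
            emeasure mu (Qset x (2*r)) \<le> ennreal C * emeasure mu (Qset x r))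
       \<and> (\<forall>R>0. \<exists>C>0. \<forall>(x::real^'n)\<in>Rplus. \<forall>r. 0 < r \<and> r \<le> R \<longrightarrow>
            emeasure mu (Bset x (2*r)) \<le> ennreal C * emeasure mu (Bset x r))
       \<and> (\<forall>R>0. \<exists>C>0. \<forall>(x::real^'n)\<in>Rplus. \<forall>r. 0 < r \<and> r \<le> R \<longrightarrow>
            emeasure mu (Dset x (2*r)) \<le> ennreal C * emeasure mu (Dset x r))"
proof (intro conjI)
  show "\<forall>R>0. \<exists>C>0. \<forall>(x::real^'n)\<in>Rplus. \<forall>r. 0 < r \<and> r \<le> R \<longrightarrow>
            emeasure mu (Qset x (2*r)) \<le> ennreal C * emeasure mu (Qset x r)"
  proof (rule doubling[OF open_Qset])
    fix x y :: "real^'n" and r :: real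
    assume "x \<in> Rplus" "0 < r" "y \<in> Qset x (2*r)" "y \<in> Rplus"
    then have l: "linfnorm (x - y) < 2*r" unfolding Qset_def by auto
    then have "\<forall>i. \<bar>(x - y)$i\<bar> < 2*r" by (simp add: linf_less)
    then have "linfnorm (x - ((1/2) *\<^sub>R x + (1/2) *\<^sub>R y)) < r"
      unfolding half_diff linf_less by (auto simp: mult.commute[of r])
    moreover have "(1/2) *\<^sub>R x + (1/2) *\<^sub>R y \<in> Rplus" using \<open>y \<in> Rplus\<close> \<open>x \<in> Rplus\<close>
      unfolding Rplus_def by (auto intro: add_pos_pos)
    moreover have "l1norm (y - x) \<le> 2 * (CARD('n) * r)"
    proof -
      have "real CARD('n) * linfnorm (x - y) \<le> real CARD('n) * (2*r)"
        by (rule mult_left_mono) (use l in auto)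
      then show ?thesis using l1_le_linf[of "x - y"] l1_minus[of y x] by linarith
    qed
    ultimately show "(1/2) *\<^sub>R x + (1/2) *\<^sub>R y \<in> Qset x r \<and> l1norm (y - x) \<le> 2 * (CARD('n) * r)"
      unfolding Qset_def by auto
  qed
  show "\<forall>R>0. \<exists>C>0. \<forall>(x::real^'n)\<in>Rplus. \<forall>r. 0 < r \<and> r \<le> R \<longrightarrow>
            emeasure mu (Bset x (2*r)) \<le> ennreal C * emeasure mu (Bset x r)"
  proof (rule doubling[OF open_Bset])
    fix x y :: "real^'n" and r :: real
    assume "x \<in> Rplus" "0 < r" "y \<in> Bset x (2*r)" "y \<in> Rplus"
    then have l: "norm (x - y) < 2*r" unfolding Bset_def by auto
    then have "norm (x - ((1/2) *\<^sub>R x + (1/2) *\<^sub>R y)) < r"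
      unfolding half_diff by simp
    moreover have "(1/2) *\<^sub>R x + (1/2) *\<^sub>R y \<in> Rplus" using \<open>y \<in> Rplus\<close> \<open>x \<in> Rplus\<close>
      unfolding Rplus_def by (auto intro: add_pos_pos)
    moreover have "l1norm (y - x) \<le> 2 * (CARD('n) * r)"
    proof -
      have "real CARD('n) * norm (x - y) \<le> real CARD('n) * (2*r)"
        by (rule mult_left_mono) (use l in auto)
      then show ?thesis using l1_le_norm[of "x - y"] l1_minus[of y x] by linarith
    qed
    ultimately show "(1/2) *\<^sub>R x + (1/2) *\<^sub>R y \<in> Bset x r \<and> l1norm (y - x) \<le> 2 * (CARD('n) * r)"
      unfolding Bset_def by auto
  qed
  show "\<forall>R>0. \<exists>C>0. \<forall>(x::real^'n)\<in>Rplus. \<forall>r. 0 < r \<and> r \<le> R \<longrightarrow>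
            emeasure mu (Dset x (2*r)) \<le> ennreal C * emeasure mu (Dset x r)"
  proof (rule doubling[OF open_Dset])
    fix x y :: "real^'n" and r :: real
    assume "x \<in> Rplus" "0 < r" "y \<in> Dset x (2*r)" "y \<in> Rplus"
    then have l: "l1norm (x - y) < 2*r" unfolding Dset_def by auto
    then have "l1norm (x - ((1/2) *\<^sub>R x + (1/2) *\<^sub>R y)) < r"
      unfolding half_diff l1_scale by simp
    moreover have "(1/2) *\<^sub>R x + (1/2) *\<^sub>R y \<in> Rplus" using \<open>y \<in> Rplus\<close> \<open>x \<in> Rplus\<close>
      unfolding Rplus_def by (auto intro: add_pos_pos)
    moreover have "1 \<le> real CARD('n)" by simp
    then have "2*r \<le> 2 * (CARD('n) * r)" using \<open>0 < r\<close> by simp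
    ultimately show "(1/2) *\<^sub>R x + (1/2) *\<^sub>R y \<in> Dset x r \<and> l1norm (y - x) \<le> 2 * (CARD('n) * r)"
      using l l1_minus[of y x] unfolding Dset_def by auto
  qed
qed

end
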